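(* Let $(\mathbb{R}^{n},g)$, $n\ge 3$, be Euclidean space with coordinates $x=(x_1,\dots,x_n)$ and $g_{ij}=\delta_{ij}$. Consider smooth functions $\varphi(\xi)$ and $u(\xi)$, where $\xi=\sum_{i=1}^{n}\alpha_i x_i$, $\alpha_i\in\mathbb{R}$, and $\sum_{i=1}^n\alpha_i^2=1$. Then $\overline g=\frac{1}{\varphi^2}g$ is a nontrivial $m$-quasi-Einstein metric with potential function $f=-m\log u$ and $\lambda\le 0$ if, and only if, $\varphi$ and $u$ satisfy $$(n-2)\frac{\varphi''}{\varphi}-\frac{m}{u}\Big(u''+2\frac{\varphi'}{\varphi}u'\Big)=0,$$ $$\frac{\varphi''}{\varphi}-(n-1)\frac{(\varphi')^2}{\varphi^2}+m\frac{\varphi'}{\varphi}\frac{u'}{u}=\frac{\lambda}{\varphi^2}.$$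
   Context: A Riemannian metric $\overline g$ (not necessarily complete) is called an $m$-quasi-Einstein metric with potential function $f$ if $\mathrm{Ric}_{\overline g}+\nabla^2 f-\frac{1}{m}\,df\otimes df=\lambda\,\overline g$ for some constants $\lambda$ and $m\neq 0$, where $\nabla^2 f$ is the Hessian of $f$ with respect to $\overline g$. It is called nontrivial if $f$ is not constant. Primes denote derivatives with respect to $\xi$. *)

theory Defs
  imports "HOL-Analysis.Analysis"
begin

text \<open>Coordinate Riemannian geometry on open subsets of R^n = real^'n.
  A metric is given by its component matrix G x $ i $ j in the standard coordinates.\<close>

definition pd :: "'n::finite \<Rightarrow> (real^'n \<Rightarrow> real) \<Rightarrow> real^'n \<Rightarrow> real" where
  "pd k F x = deriv (\<lambda>t. F (x + t *\<^sub>R axis k 1)) 0"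

definition ginv :: "(real^'n \<Rightarrow> real^'n^'n) \<Rightarrow> real^'n \<Rightarrow> real^'n^'n" where
  "ginv G x = matrix_inv (G x)"

definition christoffel :: "(real^'n::finite \<Rightarrow> real^'n^'n) \<Rightarrow> 'n \<Rightarrow> 'n \<Rightarrow> 'n \<Rightarrow> real^'n \<Rightarrow> real" where
  "christoffel G k i j x = (1/2) * (\<Sum>l\<in>UNIV. ginv G x $ k $ l *
      (pd i (\<lambda>y. G y $ j $ l) x + pd j (\<lambda>y. G y $ i $ l) x - pd l (\<lambda>y. G y $ i $ j) x))"

definition ricci :: "(real^'n::finite \<Rightarrow> real^'n^'n) \<Rightarrow> 'n \<Rightarrow> 'n \<Rightarrow> real^'n \<Rightarrow> real" where
  "ricci G i j x = (\<Sum>k\<in>UNIV. pd k (christoffel G k i j) x - pd j (christoffel G k i k) x)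
     + (\<Sum>k\<in>UNIV. \<Sum>p\<in>UNIV. christoffel G k k p x * christoffel G p i j x
                               - christoffel G k j p x * christoffel G p i k x)"

definition hessian :: "(real^'n::finite \<Rightarrow> real^'n^'n) \<Rightarrow> (real^'n \<Rightarrow> real) \<Rightarrow> 'n \<Rightarrow> 'n \<Rightarrow> real^'n \<Rightarrow> real" where
  "hessian G f i j x = pd i (pd j f) x - (\<Sum>k\<in>UNIV. christoffel G k i j x * pd k f x)"

definition quasi_einstein_on ::
  "(real^'n::finite) set \<Rightarrow> (real^'n \<Rightarrow> real^'n^'n) \<Rightarrow> (real^'n \<Rightarrow> real) \<Rightarrow> real \<Rightarrow> real \<Rightarrow> bool" where
  "quasi_einstein_on Om G f m lam \<longleftrightarrow> m \<noteq> 0 \<and>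
     (\<forall>x\<in>Om. \<forall>i j. ricci G i j x + hessian G f i j x - (1/m) * pd i f x * pd j f x = lam * G x $ i $ j)"

definition smooth_on_real :: "real set \<Rightarrow> (real \<Rightarrow> real) \<Rightarrow> bool" where
  "smooth_on_real I h \<longleftrightarrow> (\<forall>k. \<forall>t\<in>I. ((deriv ^^ k) h) differentiable (at t))"

end

theory Submission
  imports Defs
begin



lemma matrix_inv_scalar:
  fixes c :: real
  assumes "c \<noteq> 0"
  shows "matrix_inv (c *\<^sub>R (mat 1 :: real^'n::finite^'n)) = (1/c) *\<^sub>R mat 1"
proof -
  let ?M = "c *\<^sub>R (mat 1 :: real^'n^'n)"
  have ex: "\<exists>A'::real^'n^'n. ?M ** A' = mat 1 \<and> A' ** ?M = mat 1"
    by (rule exI[of _ "(1/c) *\<^sub>R mat 1"]) (simp add: assms matrix_scalar_ac scalar_matrix_assoc[symmetric])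
  define A where "A = matrix_inv ?M"
  have "?M ** A = mat 1 \<and> A ** ?M = mat 1"
    unfolding A_def matrix_inv_def by (rule someI_ex[OF ex])
  then have "c *\<^sub>R A = mat 1"
    by (metis scalar_matrix_assoc matrix_mul_lid)
  then have "A = (1/c) *\<^sub>R mat 1"
    using assms by (metis (no_types, lifting) divide_inverse_commute divide_self_if
        mult.right_neutral scaleR_one scaleR_scaleR)
  then show ?thesis by (simp add: A_def)
qed

lemma xi_shift:
  fixes \<alpha> x :: "real^'n::finite"
  shows "(\<Sum>i\<in>UNIV. \<alpha> $ i * (x + t *\<^sub>R axis k 1) $ i) = (\<Sum>i\<in>UNIV. \<alpha> $ i * x $ i) + t * \<alpha> $ k"
proof -
  have "\<And>i. \<alpha> $ i * (x + t *\<^sub>R axis k 1) $ i = \<alpha> $ i * x $ i + (if i = k then t * \<alpha> $ k else 0)"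
    by (simp add: axis_def algebra_simps)
  then show ?thesis by (simp add: sum.distrib)
qed

lemma pd_comp:
  fixes \<alpha> x :: "real^'n::finite" and F :: "real^'n \<Rightarrow> real"
  assumes I: "open I"
    and FH: "\<And>y. (\<Sum>i\<in>UNIV. \<alpha> $ i * y $ i) \<in> I \<Longrightarrow> F y = H (\<Sum>i\<in>UNIV. \<alpha> $ i * y $ i)"
    and xI: "(\<Sum>i\<in>UNIV. \<alpha> $ i * x $ i) \<in> I"
    and D: "(H has_real_derivative D) (at (\<Sum>i\<in>UNIV. \<alpha> $ i * x $ i))"
  shows "pd k F x = \<alpha> $ k * D"
proof -
  define s where "s = (\<Sum>i\<in>UNIV. \<alpha> $ i * x $ i)"
  define S where "S = {t::real. s + t * \<alpha> $ k \<in> I}"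
  have "open S" unfolding S_def
    by (rule open_vimage[OF I, of "\<lambda>t. s + t * \<alpha> $ k", unfolded vimage_def]) (intro continuous_intros)
  have "0 \<in> S" using xI by (simp add: S_def s_def)
  have d1: "((\<lambda>t. H (s + t * \<alpha> $ k)) has_real_derivative D * \<alpha> $ k) (at 0)"
    using D unfolding s_def[symmetric]
    by (auto intro!: derivative_eq_intros DERIV_chain2[where f=H])
  have d2: "((\<lambda>t. F (x + t *\<^sub>R axis k 1)) has_real_derivative D * \<alpha> $ k) (at 0)"
    apply (rule has_field_derivative_transform_within_open[OF d1 \<open>open S\<close> \<open>0 \<in> S\<close>])
  proof -
    fix t assume "t \<in> S"
    then have "(\<Sum>i\<in>UNIV. \<alpha> $ i * (x + t *\<^sub>R axis k 1) $ i) \<in> I"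
      unfolding xi_shift S_def s_def by simp
    from FH[OF this] show "H (s + t * \<alpha> $ k) = F (x + t *\<^sub>R axis k 1)"
      unfolding xi_shift s_def by simp
  qed
  show ?thesis unfolding pd_def using DERIV_imp_deriv[OF d2] by simp
qed

definition kd :: "'n \<Rightarrow> 'n \<Rightarrow> real" where "kd i j = (if i = j then 1 else 0)"

definition cc :: "real^'n::finite \<Rightarrow> 'n \<Rightarrow> 'n \<Rightarrow> 'n \<Rightarrow> real" where
  "cc a k i j = a $ i * kd j k + a $ j * kd i k - a $ k * kd i j"

lemma kd_sum1[simp]: "(\<Sum>k\<in>UNIV. kd i (k::'n::finite) * h k) = h i"
proof -
  have "(\<Sum>k\<in>UNIV. kd i (k::'n::finite) * h k) = (\<Sum>k\<in>UNIV. if i = k then h k else 0)"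
    by (rule sum.cong) (auto simp: kd_def)
  then show ?thesis by simp
qed
lemma kd_sum2[simp]: "(\<Sum>k\<in>UNIV. kd (k::'n::finite) i * h k) = h i"
proof -
  have "(\<Sum>k\<in>UNIV. kd (k::'n::finite) i * h k) = (\<Sum>k\<in>UNIV. if k = i then h k else 0)"
    by (rule sum.cong) (auto simp: kd_def)
  then show ?thesis by simp
qed
lemma kd_sum3[simp]: "(\<Sum>k\<in>UNIV. h k * kd i (k::'n::finite)) = h i"
  by (simp add: kd_def if_distrib cong: if_cong)
lemma kd_sum4[simp]: "(\<Sum>k\<in>UNIV. h k * kd (k::'n::finite) i) = h i"
  by (simp add: kd_def if_distrib cong: if_cong)
lemma kd_sum5: "(\<Sum>k\<in>UNIV. h k * (c * kd j (k::'n::finite))) = c * h j"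
proof -
  have "(\<Sum>k\<in>UNIV. h k * (c * kd j (k::'n::finite))) = (\<Sum>k\<in>UNIV. kd j k * (c * h k))"
    by (rule sum.cong) (auto simp: algebra_simps)
  then show ?thesis by simp
qed
lemma kd_sum6: "(\<Sum>k\<in>UNIV. (c * kd j (k::'n::finite)) * h k) = c * h j"
proof -
  have "(\<Sum>k\<in>UNIV. (c * kd j (k::'n::finite)) * h k) = (\<Sum>k\<in>UNIV. kd j k * (c * h k))"
    by (rule sum.cong) (auto simp: algebra_simps)
  then show ?thesis by simp
qed
lemma kd_refl[simp]: "kd i i = 1" by (simp add: kd_def)
lemma kd_sym: "kd i j = kd j i" by (simp add: kd_def)

lemma pd_comp':
  fixes \<alpha> x :: "real^'n::finite" and F :: "real^'n \<Rightarrow> real"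
  assumes xi: "xi = (\<lambda>y. \<Sum>i\<in>UNIV. \<alpha> $ i * y $ i)"
    and I: "open I"
    and FH: "\<And>y. xi y \<in> I \<Longrightarrow> F y = H (xi y)"
    and xI: "xi x \<in> I"
    and D: "(H has_real_derivative D) (at (xi x))"
  shows "pd k F x = \<alpha> $ k * D"
  using pd_comp[OF I, of \<alpha> F H x D k] FH xI D unfolding xi by blast

lemma S1: assumes "(\<Sum>i\<in>UNIV. (a $ i)^2) = 1"
  shows "(\<Sum>k\<in>UNIV. a $ k * cc a k i j) = 2 * a $ i * a $ j - kd i j"
proof -
  have "(\<Sum>k\<in>UNIV. a $ k * cc a k i j) = (\<Sum>k\<in>UNIV. kd j k * (a $ i * a $ k) + kd i k * (a $ j * a $ k) - kd i j * (a $ k)^2)"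
    by (rule sum.cong) (auto simp: cc_def algebra_simps power2_eq_square)
  also have "\<dots> = a $ i * a $ j + a $ j * a $ i - kd i j * (\<Sum>k\<in>UNIV. (a $ k)^2)"
    by (simp add: sum.distrib sum_subtractf sum_distrib_left[symmetric])
  finally show ?thesis using assms by simp
qed

lemma S2: fixes a :: "real^'n::finite" shows "(\<Sum>k\<in>UNIV. cc a k i k) = real CARD('n) * a $ i"
  by (simp add: cc_def)

lemma S3: fixes a :: "real^'n::finite" shows "(\<Sum>k\<in>UNIV. cc a k k p) = real CARD('n) * a $ p"
  by (simp add: cc_def kd_sym[of p])

lemma S4: assumes "(\<Sum>i\<in>UNIV. (a $ i)^2) = 1"
  shows "(\<Sum>k\<in>UNIV. \<Sum>p\<in>UNIV. cc a k j p * cc a p i (k::'n::finite)) = (real CARD('n) + 2) * a $ i * a $ j - 2 * kd i j"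
proof -
  have inner: "(\<Sum>p\<in>UNIV. cc a k j p * cc a p i k) =
      a $ j * a $ i + kd j k * (a $ k * a $ i) + kd j k * (a $ i * a $ k)
      - kd j k * kd i k - kd j k * (a $ k * a $ i) - kd i j * (a $ k)^2 + kd i k * (a $ k * a $ j)" for k
  proof -
    have "(\<Sum>p\<in>UNIV. cc a k j p * cc a p i k) = (\<Sum>p\<in>UNIV.
        kd k p * (a$j*a$i*kd k p) + kd k p * (a$j*a$k*kd i p) - kd k p*(a$j*a$k*kd i k)
      + kd k p * (a$p * kd j k * a$i) + kd i p * (a$p * kd j k * a$k) - (kd j k * kd i k) * (a$p)^2
      - kd j p * (a$k*a$i*kd k p) - kd j p * (a$k*a$k*kd i p) + kd j p * (a$k*a$p*kd i k))"
      by (rule sum.cong) (auto simp: cc_def kd_def algebra_simps power2_eq_square)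
    also have "\<dots> = a $ j * a $ i + kd j k * (a $ k * a $ i) + kd j k * (a $ i * a $ k)
      - kd j k * kd i k - kd j k * (a $ k * a $ i) - kd i j * (a $ k)^2 + kd i k * (a $ k * a $ j)"
      using assms by (simp add: sum.distrib sum_subtractf sum_distrib_left[symmetric]) (simp add: kd_sym algebra_simps power2_eq_square)
    finally show ?thesis .
  qed
  have "(\<Sum>k\<in>UNIV. \<Sum>p\<in>UNIV. cc a k j p * cc a p i k) = (\<Sum>k\<in>UNIV. a $ j * a $ i + kd j k * (a $ k * a $ i) + kd j k * (a $ i * a $ k)
      - kd j k * kd i k - kd j k * (a $ k * a $ i) - kd i j * (a $ k)^2 + kd i k * (a $ k * a $ j))"
    by (simp add: inner)
  also have "\<dots> = real CARD('n) * (a$j*a$i) + a$j*a$i + a$i*a$j - kd i j - a$j*a$i - kd i j * (\<Sum>k\<in>UNIV. (a $ k)^2) + a$i*a$j"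
    by (simp add: sum.distrib sum_subtractf sum_distrib_left[symmetric]) (simp add: kd_sum5)
  finally show ?thesis using assms by (simp add: algebra_simps)
qed

lemma algA: fixes ph U m n P1 P2 U1 U2 :: real
  assumes "ph \<noteq> 0" "U \<noteq> 0" "m \<noteq> 0"
  shows "(2-n)*(-(P2*ph - P1^2)/ph^2) + (n-2)*(-P1/ph)^2 + (-m*(U2*U - U1^2)/U^2) - 2*(-P1/ph)*(-m*U1/U) - (-m*U1/U)^2/m
     = (n-2)*P2/ph - (m/U)*(U2 + 2*(P1/ph)*U1)"
  using assms by (simp add: field_simps power2_eq_square)
lemma algB: fixes ph U m n P1 P2 U1 U2 lam :: real
  assumes "ph \<noteq> 0" "U \<noteq> 0" "m \<noteq> 0"
  shows "- (-(P2*ph - P1^2)/ph^2) - (n-2)*(-P1/ph)^2 + (-P1/ph)*(-m*U1/U) - lam/ph^2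
     = P2/ph - (n-1)*P1^2/ph^2 + m*(P1/ph)*(U1/U) - lam/ph^2"
  using assms by (simp add: field_simps power2_eq_square)

lemma mat_lemma:
  fixes \<alpha> :: "real^'n::finite"
  assumes n2: "CARD('n) \<ge> 2" and alpha: "(\<Sum>i\<in>UNIV. (\<alpha> $ i)^2) = 1"
    and h: "\<And>i j. \<alpha> $ i * \<alpha> $ j * A + kd i j * B = 0"
  shows "A = 0 \<and> B = 0"
proof -
  have h': "\<alpha> $ i * \<alpha> $ j * A = - (kd i j * B)" for i j using h[of i j] by linarith
  have "(\<Sum>i\<in>UNIV. \<Sum>j\<in>UNIV. \<alpha> $ i * \<alpha> $ j * (\<alpha> $ i * \<alpha> $ j * A))
      = (\<Sum>i\<in>UNIV. \<Sum>j\<in>UNIV. ((\<alpha> $ i)^2 * A) * (\<alpha> $ j)^2)"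
    by (simp add: algebra_simps power2_eq_square)
  also have "\<dots> = (\<Sum>i\<in>UNIV. ((\<alpha> $ i)^2 * A))"
    by (simp add: sum_distrib_left[symmetric] alpha)
  also have "\<dots> = A" by (simp add: sum_distrib_right[symmetric] alpha)
  finally have e1: "(\<Sum>i\<in>UNIV. \<Sum>j\<in>UNIV. \<alpha> $ i * \<alpha> $ j * (\<alpha> $ i * \<alpha> $ j * A)) = A" .
  have "(\<Sum>i\<in>UNIV. \<Sum>j\<in>UNIV. \<alpha> $ i * \<alpha> $ j * (\<alpha> $ i * \<alpha> $ j * A))
      = (\<Sum>i\<in>UNIV. \<Sum>j\<in>UNIV. kd i j * (- (\<alpha> $ i * \<alpha> $ j * B)))"
  proof (intro sum.cong refl)
    fix i j show "\<alpha> $ i * \<alpha> $ j * (\<alpha> $ i * \<alpha> $ j * A) = kd i j * (- (\<alpha> $ i * \<alpha> $ j * B))"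
      by (subst h') (simp add: algebra_simps)
  qed
  also have "\<dots> = - B" using alpha by (simp add: power2_eq_square sum_negf sum_distrib_right[symmetric])
  finally have AB: "A = - B" using e1 by simp
  have "(\<Sum>i\<in>UNIV. \<alpha> $ i * \<alpha> $ i * A + kd i i * B) = 0" using h by (simp del: kd_refl)
  then have "A * (\<Sum>i\<in>UNIV. (\<alpha> $ i)^2) + real CARD('n) * B = 0"
    by (simp add: sum.distrib sum_distrib_left power2_eq_square algebra_simps)
  then have "(real CARD('n) - 1) * B = 0" using AB alpha by (simp add: algebra_simps)
  moreover have "real CARD('n) - 1 \<noteq> 0" using n2 by simp
  ultimately show ?thesis using AB by simp
qed

theorem proposition2p2:
  fixes \<alpha> :: "real^'n::finite"
    and \<phi> u :: "real \<Rightarrow> real"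
    and I :: "real set"
    and m lam :: real
  assumes n3: "CARD('n) \<ge> 3"
    and alpha: "(\<Sum>i\<in>UNIV. (\<alpha> $ i)^2) = 1"
    and I: "open I" "is_interval I"
    and smooth: "smooth_on_real I \<phi>" "smooth_on_real I u"
    and pos: "\<forall>t\<in>I. \<phi> t \<noteq> 0 \<and> u t > 0"
    and m: "m \<noteq> 0"
    and lam: "lam \<le> 0"
    and nontriv: "\<not> (\<exists>c. \<forall>x\<in>{x. (\<Sum>i\<in>UNIV. \<alpha> $ i * x $ i) \<in> I}.
                        - m * ln (u (\<Sum>i\<in>UNIV. \<alpha> $ i * x $ i)) = c)"
  shows "quasi_einstein_on {x. (\<Sum>i\<in>UNIV. \<alpha> $ i * x $ i) \<in> I}
            (\<lambda>x. (1 / (\<phi> (\<Sum>i\<in>UNIV. \<alpha> $ i * x $ i))^2) *\<^sub>R mat 1)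
            (\<lambda>x. - m * ln (u (\<Sum>i\<in>UNIV. \<alpha> $ i * x $ i))) m lam
     \<longleftrightarrow> (\<forall>t\<in>I.
          (real CARD('n) - 2) * deriv (deriv \<phi>) t / \<phi> t
            - (m / u t) * (deriv (deriv u) t + 2 * (deriv \<phi> t / \<phi> t) * deriv u t) = 0
        \<and> deriv (deriv \<phi>) t / \<phi> t - (real CARD('n) - 1) * (deriv \<phi> t)^2 / (\<phi> t)^2
            + m * (deriv \<phi> t / \<phi> t) * (deriv u t / u t) = lam / (\<phi> t)^2)"
proof -
  define xi where "xi = (\<lambda>y::real^'n. \<Sum>i\<in>UNIV. \<alpha> $ i * y $ i)"
  define Om where "Om = {x. xi x \<in> I}"
  define G where "G = (\<lambda>x. (1 / (\<phi> (xi x))^2) *\<^sub>R (mat 1 :: real^'n^'n))"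
  define f where "f = (\<lambda>x. - m * ln (u (xi x)))"
  define p1 where "p1 = deriv \<phi>"
  define p2 where "p2 = deriv p1"
  define u1 where "u1 = deriv u"
  define u2 where "u2 = deriv u1"
  define n where "n = real CARD('n)"
  define W where "W = (\<lambda>t. - p1 t / \<phi> t)"
  define W' where "W' = (\<lambda>t. - (p2 t * \<phi> t - (p1 t)^2) / (\<phi> t)^2)"
  define F1 where "F1 = (\<lambda>t. - m * u1 t / u t)"
  define F2 where "F2 = (\<lambda>t. - m * (u2 t * u t - (u1 t)^2) / (u t)^2)"
  have dphi: "(\<phi> has_real_derivative p1 t) (at t)" "(p1 has_real_derivative p2 t) (at t)"
    "(u has_real_derivative u1 t) (at t)" "(u1 has_real_derivative u2 t) (at t)" if "t \<in> I" for t
  proof -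
    have "((deriv ^^ 0) \<phi>) differentiable at t" "((deriv ^^ 1) \<phi>) differentiable at t"
      "((deriv ^^ 0) u) differentiable at t" "((deriv ^^ 1) u) differentiable at t"
      using smooth that unfolding smooth_on_real_def by blast+
    then have "\<phi> differentiable at t" "deriv \<phi> differentiable at t" "u differentiable at t" "deriv u differentiable at t"
      by simp_all
    then show "(\<phi> has_real_derivative p1 t) (at t)" "(p1 has_real_derivative p2 t) (at t)"
      "(u has_real_derivative u1 t) (at t)" "(u1 has_real_derivative u2 t) (at t)"
      unfolding p1_def p2_def u1_def u2_def by (simp_all add: DERIV_deriv_iff_real_differentiable)
  qed
  have phinz: "\<phi> t \<noteq> 0" and upos: "u t > 0" if "t \<in> I" for t using pos that by auto
  have Gent: "G y $ i $ j = 1 / (\<phi> (xi y))^2 * kd i j" for y i j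
    by (simp add: G_def mat_def kd_def)
  have ginv: "ginv G y $ k $ l = (\<phi> (xi y))^2 * kd k l" if "xi y \<in> I" for y k l
  proof -
    have "ginv G y = (1 / (1 / (\<phi> (xi y))^2)) *\<^sub>R mat 1"
      unfolding ginv_def G_def by (rule matrix_inv_scalar) (use phinz[OF that] in simp)
    then show ?thesis by (simp add: mat_def kd_def)
  qed
  have dinvsq: "((\<lambda>t. 1 / (\<phi> t)^2 * c) has_real_derivative (-2 * p1 t / (\<phi> t)^3) * c) (at t)"
    if "t \<in> I" for t c
  proof (rule DERIV_cong)
    show "((\<lambda>t. 1 / (\<phi> t)^2 * c) has_real_derivative ((0 * (\<phi> t)^2 - 1 * (2 * (p1 t * \<phi> t))) / ((\<phi> t)^2 * (\<phi> t)^2)) * c) (at t)"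
      using phinz[OF that] dphi(1)[OF that]
      by (auto intro!: derivative_eq_intros)
    show "(0 * (\<phi> t)^2 - 1 * (2 * (p1 t * \<phi> t))) / ((\<phi> t)^2 * (\<phi> t)^2) * c = -2 * p1 t / (\<phi> t)^3 * c"
      using phinz[OF that] by (simp add: field_simps power2_eq_square power3_eq_cube)
  qed
  have dG: "pd q (\<lambda>y. G y $ j $ l) x = \<alpha> $ q * ((-2 * p1 (xi x) / (\<phi> (xi x))^3) * kd j l)"
    if "x \<in> Om" for x q j l
    apply (rule pd_comp'[OF xi_def I(1), where H = "\<lambda>t. 1 / (\<phi> t)^2 * kd j l"])
    using that dinvsq by (auto simp: Gent Om_def xi_def)
  have Gam: "christoffel G k i j y = W (xi y) * cc \<alpha> k i j" if "y \<in> Om" for y k i j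
  proof -
    have yI: "xi y \<in> I" using that by (simp add: Om_def)
    have "christoffel G k i j y = 1/2 * (\<Sum>l\<in>UNIV. ((\<phi> (xi y))^2 * kd k l) * (
      (\<alpha> $ i * ((-2 * p1 (xi y) / (\<phi> (xi y))^3) * kd j l) + \<alpha> $ j * ((-2 * p1 (xi y) / (\<phi> (xi y))^3) * kd i l)
        - \<alpha> $ l * ((-2 * p1 (xi y) / (\<phi> (xi y))^3) * kd i j))))"
      unfolding christoffel_def using that by (simp add: ginv[OF yI] dG)
    also have "\<dots> = 1/2 * ((\<phi> (xi y))^2 * (
      \<alpha> $ i * ((-2 * p1 (xi y) / (\<phi> (xi y))^3) * kd j k) + \<alpha> $ j * ((-2 * p1 (xi y) / (\<phi> (xi y))^3) * kd i k)
        - \<alpha> $ k * ((-2 * p1 (xi y) / (\<phi> (xi y))^3) * kd i j)))"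
      by (simp only: kd_sum6)
    also have "\<dots> = W (xi y) * cc \<alpha> k i j"
      using phinz[OF yI] by (simp add: W_def cc_def field_simps power2_eq_square power3_eq_cube)
    finally show ?thesis .
  qed
  have dGam: "pd q (christoffel G k i j) x = \<alpha> $ q * (W' (xi x) * cc \<alpha> k i j)" if "x \<in> Om" for x q k i j
  proof (rule pd_comp'[OF xi_def I(1), where H = "\<lambda>t. W t * cc \<alpha> k i j"])
    show "christoffel G k i j y = W (xi y) * cc \<alpha> k i j" if "xi y \<in> I" for y
      using Gam that by (simp add: Om_def xi_def)
    show "xi x \<in> I" using that by (simp add: Om_def)
    show "((\<lambda>t. W t * cc \<alpha> k i j) has_real_derivative W' (xi x) * cc \<alpha> k i j) (at (xi x))"
    proof -
      have xI: "xi x \<in> I" using that by (simp add: Om_def)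
      note d = dphi(1,2)[OF xI] phinz[OF xI]
      show ?thesis unfolding W_def W'_def
        apply (rule DERIV_cong)
         apply (rule derivative_eq_intros d refl | assumption)+
        using d(3) by (simp add: field_simps power2_eq_square)
    qed
  qed
  have df: "pd j f y = \<alpha> $ j * F1 (xi y)" if "xi y \<in> I" for y j
  proof (rule pd_comp'[OF xi_def I(1), where H = "\<lambda>t. - m * ln (u t)"])
    show "f y = - m * ln (u (xi y))" for y by (simp add: f_def)
    show "xi y \<in> I" by (rule that)
    note d = dphi(3)[OF that] upos[OF that]
    show "((\<lambda>t. - m * ln (u t)) has_real_derivative F1 (xi y)) (at (xi y))"
      unfolding F1_def
      apply (rule DERIV_cong)
       apply (rule derivative_eq_intros d refl | assumption)+
      using d(2) by (simp add: field_simps)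
  qed
  have ddf: "pd i (pd j f) x = \<alpha> $ i * (\<alpha> $ j * F2 (xi x))" if "x \<in> Om" for x i j
  proof (rule pd_comp'[OF xi_def I(1), where H = "\<lambda>t. \<alpha> $ j * F1 t"])
    show "pd j f y = \<alpha> $ j * F1 (xi y)" if "xi y \<in> I" for y using df[OF that] .
    show xI: "xi x \<in> I" using that by (simp add: Om_def)
    note d = dphi(3,4)[OF xI] upos[OF xI]
    have unz: "u (xi x) \<noteq> 0" using d(3) by simp
    show "((\<lambda>t. \<alpha> $ j * F1 t) has_real_derivative \<alpha> $ j * F2 (xi x)) (at (xi x))"
      unfolding F1_def F2_def
      apply (rule DERIV_cong)
       apply (rule derivative_eq_intros d unz refl | assumption)+
      using d(3) by (simp add: field_simps power2_eq_square)
  qed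
  have swap: "(\<Sum>k\<in>UNIV. \<Sum>p\<in>UNIV. cc \<alpha> k k p * cc \<alpha> p i j) = n * (2 * \<alpha> $ i * \<alpha> $ j - kd i j)" for i j
  proof -
    have "(\<Sum>k\<in>UNIV. \<Sum>p\<in>UNIV. cc \<alpha> k k p * cc \<alpha> p i j) = (\<Sum>p\<in>UNIV. \<Sum>k\<in>UNIV. cc \<alpha> k k p * cc \<alpha> p i j)"
      by (rule sum.swap)
    also have "\<dots> = (\<Sum>p\<in>UNIV. (\<Sum>k\<in>UNIV. cc \<alpha> k k p) * cc \<alpha> p i j)"
      by (simp add: sum_distrib_right)
    also have "\<dots> = n * (\<Sum>p\<in>UNIV. \<alpha> $ p * cc \<alpha> p i j)"
      by (simp add: S3 n_def sum_distrib_left mult.assoc)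
    finally show ?thesis using S1[OF alpha] by simp
  qed
  have ric: "ricci G i j x = W' (xi x) * (2 * \<alpha> $ i * \<alpha> $ j - kd i j) - W' (xi x) * \<alpha> $ j * (n * \<alpha> $ i)
      + (W (xi x))^2 * (n * (2 * \<alpha> $ i * \<alpha> $ j - kd i j)) - (W (xi x))^2 * ((n + 2) * \<alpha> $ i * \<alpha> $ j - 2 * kd i j)"
    if "x \<in> Om" for x i j
  proof -
    have "ricci G i j x = (\<Sum>k\<in>UNIV. \<alpha> $ k * (W' (xi x) * cc \<alpha> k i j) - \<alpha> $ j * (W' (xi x) * cc \<alpha> k i k))
       + (\<Sum>k\<in>UNIV. \<Sum>p\<in>UNIV. W (xi x) * cc \<alpha> k k p * (W (xi x) * cc \<alpha> p i j) - W (xi x) * cc \<alpha> k j p * (W (xi x) * cc \<alpha> p i k))"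
      unfolding ricci_def by (simp add: dGam[OF that] Gam[OF that])
    also have "\<dots> = W' (xi x) * (\<Sum>k\<in>UNIV. \<alpha> $ k * cc \<alpha> k i j) - W' (xi x) * \<alpha> $ j * (\<Sum>k\<in>UNIV. cc \<alpha> k i k)
       + (W (xi x))^2 * (\<Sum>k\<in>UNIV. \<Sum>p\<in>UNIV. cc \<alpha> k k p * cc \<alpha> p i j) - (W (xi x))^2 * (\<Sum>k\<in>UNIV. \<Sum>p\<in>UNIV. cc \<alpha> k j p * cc \<alpha> p i k)"
      by (simp add: sum_subtractf sum_distrib_left algebra_simps power2_eq_square)
    finally show ?thesis using S1[OF alpha] S2[of \<alpha>] S4[OF alpha] swap by (simp add: n_def)
  qed
  have hes: "hessian G f i j x = \<alpha> $ i * (\<alpha> $ j * F2 (xi x)) - W (xi x) * F1 (xi x) * (2 * \<alpha> $ i * \<alpha> $ j - kd i j)"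
    if "x \<in> Om" for x i j
  proof -
    have xI: "xi x \<in> I" using that by (simp add: Om_def)
    have "hessian G f i j x = \<alpha> $ i * (\<alpha> $ j * F2 (xi x)) - (\<Sum>k\<in>UNIV. W (xi x) * cc \<alpha> k i j * (\<alpha> $ k * F1 (xi x)))"
      unfolding hessian_def by (simp add: ddf[OF that] Gam[OF that] df[OF xI])
    also have "(\<Sum>k\<in>UNIV. W (xi x) * cc \<alpha> k i j * (\<alpha> $ k * F1 (xi x))) = W (xi x) * F1 (xi x) * (\<Sum>k\<in>UNIV. \<alpha> $ k * cc \<alpha> k i j)"
      by (simp add: sum_distrib_left algebra_simps)
    finally show ?thesis using S1[OF alpha] by simp
  qed
  define A where "A = (\<lambda>t. (2 - n) * W' t + (n - 2) * (W t)^2 + F2 t - 2 * W t * F1 t - (F1 t)^2 / m)"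
  define B where "B = (\<lambda>t. - W' t - (n - 2) * (W t)^2 + W t * F1 t - lam / (\<phi> t)^2)"
  have key: "ricci G i j x + hessian G f i j x - (1/m) * pd i f x * pd j f x - lam * G x $ i $ j
      = \<alpha> $ i * \<alpha> $ j * A (xi x) + kd i j * B (xi x)" if "x \<in> Om" for x i j
  proof -
    have xI: "xi x \<in> I" using that by (simp add: Om_def)
    show ?thesis
      unfolding ric[OF that] hes[OF that] df[OF xI] Gent A_def B_def
      by (simp only: divide_inverse) algebra
  qed
  have QE: "quasi_einstein_on Om G f m lam \<longleftrightarrow> (\<forall>x\<in>Om. \<forall>i j. \<alpha> $ i * \<alpha> $ j * A (xi x) + kd i j * B (xi x) = 0)"
  proof -
    have "(ricci G i j x + hessian G f i j x - 1 / m * pd i f x * pd j f x = lam * G x $ i $ j) \<longleftrightarrow>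
       \<alpha> $ i * \<alpha> $ j * A (xi x) + kd i j * B (xi x) = 0" if "x \<in> Om" for x i j
      using key[OF that, of i j] by linarith
    then show ?thesis unfolding quasi_einstein_on_def using m by auto
  qed
  have AB: "A t = (real CARD('n) - 2) * deriv (deriv \<phi>) t / \<phi> t
            - (m / u t) * (deriv (deriv u) t + 2 * (deriv \<phi> t / \<phi> t) * deriv u t)"
    "B t = deriv (deriv \<phi>) t / \<phi> t - (real CARD('n) - 1) * (deriv \<phi> t)^2 / (\<phi> t)^2
            + m * (deriv \<phi> t / \<phi> t) * (deriv u t / u t) - lam / (\<phi> t)^2" if "t \<in> I" for t
  proof -
    have "u t \<noteq> 0" using upos[OF that] by simp
    then show "A t = (real CARD('n) - 2) * deriv (deriv \<phi>) t / \<phi> t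
            - (m / u t) * (deriv (deriv u) t + 2 * (deriv \<phi> t / \<phi> t) * deriv u t)"
      "B t = deriv (deriv \<phi>) t / \<phi> t - (real CARD('n) - 1) * (deriv \<phi> t)^2 / (\<phi> t)^2
            + m * (deriv \<phi> t / \<phi> t) * (deriv u t / u t) - lam / (\<phi> t)^2"
      using m phinz[OF that]
      unfolding A_def B_def W_def W'_def F1_def F2_def p2_def p1_def u1_def u2_def n_def
      apply -
      apply (rule algA; assumption)
      apply (rule algB; assumption)
      done
  qed
  have main: "quasi_einstein_on Om G f m lam \<longleftrightarrow> (\<forall>t\<in>I.
          (real CARD('n) - 2) * deriv (deriv \<phi>) t / \<phi> t
            - (m / u t) * (deriv (deriv u) t + 2 * (deriv \<phi> t / \<phi> t) * deriv u t) = 0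
        \<and> deriv (deriv \<phi>) t / \<phi> t - (real CARD('n) - 1) * (deriv \<phi> t)^2 / (\<phi> t)^2
            + m * (deriv \<phi> t / \<phi> t) * (deriv u t / u t) = lam / (\<phi> t)^2)"
  proof -
    have "(\<forall>x\<in>Om. \<forall>i j. \<alpha> $ i * \<alpha> $ j * A (xi x) + kd i j * B (xi x) = 0) \<longleftrightarrow> (\<forall>t\<in>I. A t = 0 \<and> B t = 0)"
    proof
      assume h: "\<forall>x\<in>Om. \<forall>i j. \<alpha> $ i * \<alpha> $ j * A (xi x) + kd i j * B (xi x) = 0"
      show "\<forall>t\<in>I. A t = 0 \<and> B t = 0"
      proof
        fix t assume tI: "t \<in> I"
        have xt: "xi (t *\<^sub>R \<alpha>) = t"
          using alpha by (simp add: xi_def power2_eq_square sum_distrib_left[symmetric] algebra_simps)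
        then have "t *\<^sub>R \<alpha> \<in> Om" using tI by (simp add: Om_def)
        then have h2: "\<alpha> $ i * \<alpha> $ j * A (xi (t *\<^sub>R \<alpha>)) + kd i j * B (xi (t *\<^sub>R \<alpha>)) = 0" for i j
          using h by blast
        have h3: "\<alpha> $ i * \<alpha> $ j * A t + kd i j * B t = 0" for i j using h2[of i j] unfolding xt .
        have n2: "CARD('n) \<ge> 2" using n3 by simp
        show "A t = 0 \<and> B t = 0" by (rule mat_lemma[OF n2 alpha h3])
      qed
    next
      assume "\<forall>t\<in>I. A t = 0 \<and> B t = 0"
      then show "\<forall>x\<in>Om. \<forall>i j. \<alpha> $ i * \<alpha> $ j * A (xi x) + kd i j * B (xi x) = 0"
        by (simp add: Om_def)
    qed
    also have "\<dots> \<longleftrightarrow> (\<forall>t\<in>I.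
          (real CARD('n) - 2) * deriv (deriv \<phi>) t / \<phi> t
            - (m / u t) * (deriv (deriv u) t + 2 * (deriv \<phi> t / \<phi> t) * deriv u t) = 0
        \<and> deriv (deriv \<phi>) t / \<phi> t - (real CARD('n) - 1) * (deriv \<phi> t)^2 / (\<phi> t)^2
            + m * (deriv \<phi> t / \<phi> t) * (deriv u t / u t) = lam / (\<phi> t)^2)"
    proof (rule ball_cong[OF refl])
      fix t assume "t \<in> I"
      show "(A t = 0 \<and> B t = 0) = ((real CARD('n) - 2) * deriv (deriv \<phi>) t / \<phi> t
            - (m / u t) * (deriv (deriv u) t + 2 * (deriv \<phi> t / \<phi> t) * deriv u t) = 0
        \<and> deriv (deriv \<phi>) t / \<phi> t - (real CARD('n) - 1) * (deriv \<phi> t)^2 / (\<phi> t)^2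
            + m * (deriv \<phi> t / \<phi> t) * (deriv u t / u t) = lam / (\<phi> t)^2)"
        unfolding AB[OF \<open>t \<in> I\<close>] by (simp only: right_minus_eq)
    qed
    finally show ?thesis using QE by simp
  qed
  then show ?thesis unfolding Om_def G_def f_def xi_def .
qed

end
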